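(* Let $K\ge2$ and let $C_1,\dots,C_{K-1}>0$. Let $\Phi$ be the cumulative distribution function of the standard normal distribution. Then the function $f:\mathbb{R}^K\to\mathbb{R}$, $f(\vec{x})=\sum_{i=1}^{K-1}\Phi(C_ix_i-C_ix_K)$, is convex on the domain $D=\{\vec{x}\in\mathbb{R}^K: x_i-x_K\le 0\ \forall i<K\}$. *)

theory Defs
  imports "HOL-Probability.Probability"
begin

definition Phi :: "real \<Rightarrow> real" where
  "Phi t = (LBINT x:{..t}. std_normal_density x)"

text \<open>Vectors in R^K are represented as functions nat => real indexed by 1..K
  (coordinates outside 1..K are required to be 0).\<close>
definition vecK :: "nat \<Rightarrow> (nat \<Rightarrow> real) set" where
  "vecK K = {x. \<forall>i. i \<notin> {1..K} \<longrightarrow> x i = 0}"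

text \<open>Convexity of a real function on a set of such vectors, literally the library
  definition convex_on with pointwise vector operations.\<close>
definition convex_on_fun :: "(nat \<Rightarrow> real) set \<Rightarrow> ((nat \<Rightarrow> real) \<Rightarrow> real) \<Rightarrow> bool" where
  "convex_on_fun S f \<longleftrightarrow>
     (\<forall>x\<in>S. \<forall>y\<in>S. \<forall>u\<ge>0. \<forall>v\<ge>0. u + v = 1 \<longrightarrow> (\<lambda>i. u * x i + v * y i) \<in> S) \<and>
     (\<forall>x\<in>S. \<forall>y\<in>S. \<forall>u\<ge>0. \<forall>v\<ge>0. u + v = 1 \<longrightarrow>
        f (\<lambda>i. u * x i + v * y i) \<le> u * f x + v * f y)"

end

theory Submission
  imports Defs
begin

lemma std_int: "interval_lebesgue_integrable lborel (-\<infinity>) \<infinity> std_normal_density"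
proof -
  have "integrable lborel std_normal_density"
    using integrable_std_normal_moment[of 0] by simp
  then show ?thesis
    unfolding interval_lebesgue_integrable_def by (simp add: einterval_def set_integrable_def)
qed

lemma std_int_any: "interval_lebesgue_integrable lborel a b std_normal_density"
proof -
  have I: "set_integrable lborel UNIV std_normal_density"
    using std_int unfolding interval_lebesgue_integrable_def by (simp add: einterval_def)
  have "set_integrable lborel (einterval c d) std_normal_density" for c d
    by (rule set_integrable_subset[OF I]) auto
  then show ?thesis unfolding interval_lebesgue_integrable_def by simp
qed

lemma Phi_eq: "Phi t = (LBINT x=-\<infinity>..ereal t. std_normal_density x)"
proof -
  have "(LBINT x=-\<infinity>..ereal t. std_normal_density x)
     = (LBINT x : {x. -\<infinity> \<le> ereal x \<and> ereal x \<le> ereal t}. std_normal_density x)"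
    by (rule interval_integral_Icc') simp
  also have "{x. -\<infinity> \<le> ereal x \<and> ereal x \<le> ereal t} = {..t}" by auto
  finally show ?thesis unfolding Phi_def by simp
qed

lemma Phi_split: "Phi t = Phi 0 + (LBINT x=0..ereal t. std_normal_density x)"
proof -
  have "(LBINT x=-\<infinity>..ereal 0. std_normal_density x) + (LBINT x=ereal 0..ereal t. std_normal_density x)
     = (LBINT x=-\<infinity>..ereal t. std_normal_density x)"
    by (rule interval_integral_sum) (simp add: std_int_any)
  then show ?thesis using Phi_eq[of 0] Phi_eq[of t] by (simp add: zero_ereal_def)
qed

lemma Phi_deriv: "(Phi has_real_derivative std_normal_density x) (at x)"
proof -
  define a where "a = min 0 (x - 1)"
  define b where "b = max 0 (x + 1)"
  have "continuous_on {a..b} std_normal_density"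
    unfolding std_normal_density_def by (intro continuous_intros) simp
  then have "((\<lambda>u. LBINT y=ereal 0..ereal u. std_normal_density y) has_vector_derivative std_normal_density x) (at x within {a..b})"
    by (rule interval_integral_FTC2[rotated 2]) (simp_all add: a_def b_def)
  moreover have "x \<in> interior {a..b}"
    unfolding a_def b_def by (simp add: interior_atLeastAtMost_real min_def max_def)
  then have "at x within {a..b} = at x" by (rule at_within_interior)
  ultimately have "((\<lambda>u. LBINT y=ereal 0..ereal u. std_normal_density y) has_vector_derivative std_normal_density x) (at x)"
    by (simp only:)
  then have "((\<lambda>u. LBINT y=ereal 0..ereal u. std_normal_density y) has_real_derivative std_normal_density x) (at x)"
    by (simp only: has_real_derivative_iff_has_vector_derivative)
  then have "((\<lambda>u. Phi 0 + (LBINT y=ereal 0..ereal u. std_normal_density y)) has_real_derivative 0 + std_normal_density x) (at x)"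
    by (rule DERIV_add[OF DERIV_const])
  moreover have "(\<lambda>u. Phi 0 + (LBINT y=ereal 0..ereal u. std_normal_density y)) = Phi"
  proof
    fix u
    have e: "ereal 0 = 0" by simp
    show "Phi 0 + (LBINT y=ereal 0..ereal u. std_normal_density y) = Phi u"
      unfolding e by (rule Phi_split[symmetric])
  qed
  ultimately show ?thesis by (simp only: add_0_left)
qed

lemma Phi_convex: "convex_on {..0} Phi"
proof (rule convex_on_realI[where f'=std_normal_density])
  show "connected {..0::real}" by simp
  show "\<And>x. (Phi has_real_derivative std_normal_density x) (at x)" by (rule Phi_deriv)
  fix x y :: real assume "x \<in> {..0}" "y \<in> {..0}" "x \<le> y"
  then have "(-y)*(-y) \<le> (-x)*(-x)" by (intro mult_mono) auto
  then have "y^2 \<le> x^2" by (simp add: power2_eq_square)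
  then have E: "exp (- x\<^sup>2 / 2) \<le> exp (- y\<^sup>2 / 2)" by simp
  show "std_normal_density x \<le> std_normal_density y"
    unfolding std_normal_density_def by (rule mult_left_mono[OF E]) simp
qed

theorem lemma2:
  fixes K :: nat and C :: "nat \<Rightarrow> real"
  assumes "K \<ge> 2"
    and "\<And>i. i \<in> {1..K-1} \<Longrightarrow> C i > 0"
  shows "convex_on_fun {x \<in> vecK K. \<forall>i\<in>{1..K-1}. x i - x K \<le> 0}
           (\<lambda>x. \<Sum>i=1..K-1. Phi (C i * x i - C i * x K))"
  unfolding convex_on_fun_def
proof (intro conjI ballI allI impI)
  fix x y :: "nat \<Rightarrow> real" and u v :: real
  assume x: "x \<in> {x \<in> vecK K. \<forall>i\<in>{1..K-1}. x i - x K \<le> 0}"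
    and y: "y \<in> {x \<in> vecK K. \<forall>i\<in>{1..K-1}. x i - x K \<le> 0}"
    and u: "u \<ge> 0" and v: "v \<ge> 0" and uv: "u + v = 1"
  show "(\<lambda>i. u * x i + v * y i) \<in> {x \<in> vecK K. \<forall>i\<in>{1..K-1}. x i - x K \<le> 0}"
  proof -
    have "(\<lambda>i. u * x i + v * y i) \<in> vecK K" using x y by (auto simp: vecK_def)
    moreover have "u * x i + v * y i - (u * x K + v * y K) \<le> 0" if "i \<in> {1..K-1}" for i
    proof -
      have "x i - x K \<le> 0" "y i - y K \<le> 0" using x y that by auto
      then have "u * (x i - x K) \<le> 0" "v * (y i - y K) \<le> 0"
        using u v by (auto simp: mult_nonneg_nonpos)
      then show ?thesis by (simp add: algebra_simps)
    qed
    ultimately show ?thesis by auto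
  qed
  show "(\<Sum>i = 1..K - 1. Phi (C i * (u * x i + v * y i) - C i * (u * x K + v * y K)))
         \<le> u * (\<Sum>i = 1..K - 1. Phi (C i * x i - C i * x K)) + v * (\<Sum>i = 1..K - 1. Phi (C i * y i - C i * y K))"
    unfolding sum_distrib_left sum.distrib[symmetric]
  proof (rule sum_mono)
    fix i assume i: "i \<in> {1..K-1}"
    have "x i - x K \<le> 0" "y i - y K \<le> 0" using x y i by auto
    moreover have "C i > 0" using assms(2) i by auto
    ultimately have a: "C i * x i - C i * x K \<in> {..0}" and b: "C i * y i - C i * y K \<in> {..0}"
      by (auto simp: right_diff_distrib[symmetric] mult_nonneg_nonpos mult_pos_neg)
    have "Phi ((1 - v) *\<^sub>R (C i * x i - C i * x K) + v *\<^sub>R (C i * y i - C i * y K))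
        \<le> (1 - v) * Phi (C i * x i - C i * x K) + v * Phi (C i * y i - C i * y K)"
      using convex_onD[OF Phi_convex, of v, OF v _ a b] u uv by auto
    moreover have "u = 1 - v" using uv by simp
    moreover have "C i * (u * x i + v * y i) - C i * (u * x K + v * y K)
       = (1 - v) *\<^sub>R (C i * x i - C i * x K) + v *\<^sub>R (C i * y i - C i * y K)"
      unfolding real_scaleR_def \<open>u = 1 - v\<close> by (simp add: algebra_simps)
    ultimately show "Phi (C i * (u * x i + v * y i) - C i * (u * x K + v * y K))
        \<le> u * Phi (C i * x i - C i * x K) + v * Phi (C i * y i - C i * y K)"
      by simp
  qed
qed

end
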